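(* Let $Q$ be an admissible orientation of $\tilde A_n$ with exactly one source $x$ and one sink $y$, and let $\omega,\upsilon$ be the two different maximal paths of $Q$ (both from $x$ to $y$). Let $a\in\Bbbk\setminus\{0\}$. Then for every indecomposable two-sided ideal $I$ of $\Bbbk Q$, \[(\omega+a\upsilon)\cdot I\cong\begin{cases}(\omega+a\upsilon),&\varepsilon_x\in I,\\0,&\text{otherwise},\end{cases}\qquad I\cdot(\omega+a\upsilon)\cong\begin{cases}(\omega+a\upsilon),&\varepsilon_y\in I,\\0,&\text{otherwise}.\end{cases}\] In particular, $(\omega+a\upsilon)\cdot(\omega+b\upsilon)=0$ for every $b\in\Bbbk\setminus\{0\}$.
   Context: $\Bbbk$ is an algebraically closed field. An admissible orientation of $\tilde A_n$ is a finite quiver with $n$ vertices whose underlying undirected graph is a cycle, having no oriented cycle and at least one source. Paths include trivial paths $\varepsilon_z$; products of paths are concatenations when defined and $0$ otherwise. Maximal paths are paths not properly contained as subpaths of other paths. $(\omega+a\upsilon)$ denotes the ideal $\Bbbk(\omega+a\upsilon)$ generated by $\omega+a\upsilon$. An ideal is indecomposable if non-zero and not a direct sum of two non-zero ideals. *)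

theory Defs
  imports "HOL-Computational_Algebra.Polynomial"
begin

text \<open>Quiver: vertex set V, arrow set E, source map s, target map t.
A path is a pair (start vertex, list of arrows in travel order); the
trivial path at v is (v, []).\<close>

type_synonym ('v,'e) qpath = "'v \<times> 'e list"

fun chain :: "('e \<Rightarrow> 'v) \<Rightarrow> ('e \<Rightarrow> 'v) \<Rightarrow> 'v \<Rightarrow> 'e list \<Rightarrow> bool" where
  "chain s t v [] = True"
| "chain s t v (e # es) = (s e = v \<and> chain s t (t e) es)"

definition path_end :: "('e \<Rightarrow> 'v) \<Rightarrow> ('v,'e) qpath \<Rightarrow> 'v" where
  "path_end t p = (if snd p = [] then fst p else t (last (snd p)))"

definition is_path :: "'v set \<Rightarrow> 'e set \<Rightarrow> ('e \<Rightarrow> 'v) \<Rightarrow> ('e \<Rightarrow> 'v) \<Rightarrow> ('v,'e) qpath \<Rightarrow> bool" where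
  "is_path V E s t p \<longleftrightarrow> fst p \<in> V \<and> set (snd p) \<subseteq> E \<and> chain s t (fst p) (snd p)"

text \<open>Product of paths p * q: first q, then p (defined iff p starts where q ends),
otherwise 0 (None).\<close>
definition pmul :: "('e \<Rightarrow> 'v) \<Rightarrow> ('v,'e) qpath \<Rightarrow> ('v,'e) qpath \<Rightarrow> ('v,'e) qpath option" where
  "pmul t p q = (if fst p = path_end t q then Some (fst q, snd q @ snd p) else None)"

definition subpath :: "('e \<Rightarrow> 'v) \<Rightarrow> ('v,'e) qpath \<Rightarrow> ('v,'e) qpath \<Rightarrow> bool" where
  "subpath t p q \<longleftrightarrow> (\<exists>us ws. snd q = us @ snd p @ ws \<and> fst p = path_end t (fst q, us))"

definition maximal_path :: "'v set \<Rightarrow> 'e set \<Rightarrow> ('e \<Rightarrow> 'v) \<Rightarrow> ('e \<Rightarrow> 'v) \<Rightarrow> ('v,'e) qpath \<Rightarrow> bool" where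
  "maximal_path V E s t p \<longleftrightarrow> is_path V E s t p \<and>
     \<not> (\<exists>q. is_path V E s t q \<and> q \<noteq> p \<and> subpath t p q)"

definition is_source :: "'v set \<Rightarrow> 'e set \<Rightarrow> ('e \<Rightarrow> 'v) \<Rightarrow> ('e \<Rightarrow> 'v) \<Rightarrow> 'v \<Rightarrow> bool" where
  "is_source V E s t v \<longleftrightarrow> v \<in> V \<and> (\<forall>e\<in>E. t e \<noteq> v)"

definition is_sink :: "'v set \<Rightarrow> 'e set \<Rightarrow> ('e \<Rightarrow> 'v) \<Rightarrow> ('e \<Rightarrow> 'v) \<Rightarrow> 'v \<Rightarrow> bool" where
  "is_sink V E s t v \<longleftrightarrow> v \<in> V \<and> (\<forall>e\<in>E. s e \<noteq> v)"

definition cycle_quiver :: "'v set \<Rightarrow> 'e set \<Rightarrow> ('e \<Rightarrow> 'v) \<Rightarrow> ('e \<Rightarrow> 'v) \<Rightarrow> nat \<Rightarrow> bool" where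
  "cycle_quiver V E s t n \<longleftrightarrow> finite V \<and> finite E \<and> s ` E \<subseteq> V \<and> t ` E \<subseteq> V \<and>
     (\<exists>vs es. length vs = n \<and> length es = n \<and> distinct vs \<and> distinct es \<and>
        set vs = V \<and> set es = E \<and>
        (\<forall>i<n. {s (es ! i), t (es ! i)} = {vs ! i, vs ! ((i + 1) mod n)}))"

definition no_oriented_cycle :: "'v set \<Rightarrow> 'e set \<Rightarrow> ('e \<Rightarrow> 'v) \<Rightarrow> ('e \<Rightarrow> 'v) \<Rightarrow> bool" where
  "no_oriented_cycle V E s t \<longleftrightarrow>
     \<not> (\<exists>p. is_path V E s t p \<and> snd p \<noteq> [] \<and> path_end t p = fst p)"

definition admissible_A :: "'v set \<Rightarrow> 'e set \<Rightarrow> ('e \<Rightarrow> 'v) \<Rightarrow> ('e \<Rightarrow> 'v) \<Rightarrow> nat \<Rightarrow> bool" where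
  "admissible_A V E s t n \<longleftrightarrow> cycle_quiver V E s t n \<and> no_oriented_cycle V E s t \<and>
     (\<exists>v. is_source V E s t v)"

definition pathalg :: "'v set \<Rightarrow> 'e set \<Rightarrow> ('e \<Rightarrow> 'v) \<Rightarrow> ('e \<Rightarrow> 'v) \<Rightarrow> (('v,'e) qpath \<Rightarrow> 'k::field) set" where
  "pathalg V E s t = {f. finite {p. f p \<noteq> 0} \<and> (\<forall>p. f p \<noteq> 0 \<longrightarrow> is_path V E s t p)}"

definition amul :: "('e \<Rightarrow> 'v) \<Rightarrow> (('v,'e) qpath \<Rightarrow> 'k::field) \<Rightarrow> (('v,'e) qpath \<Rightarrow> 'k) \<Rightarrow> (('v,'e) qpath \<Rightarrow> 'k)" where
  "amul t f g = (\<lambda>r. \<Sum>(p,q) \<in> {p. f p \<noteq> 0} \<times> {q. g q \<noteq> 0}.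
                      if pmul t p q = Some r then f p * g q else 0)"

definition azero :: "('v,'e) qpath \<Rightarrow> 'k::field" where
  "azero = (\<lambda>_. 0)"

definition basis_el :: "('v,'e) qpath \<Rightarrow> ('v,'e) qpath \<Rightarrow> 'k::field" where
  "basis_el p = (\<lambda>r. if r = p then 1 else 0)"

definition two_sided_ideal :: "'v set \<Rightarrow> 'e set \<Rightarrow> ('e \<Rightarrow> 'v) \<Rightarrow> ('e \<Rightarrow> 'v) \<Rightarrow> (('v,'e) qpath \<Rightarrow> 'k::field) set \<Rightarrow> bool" where
  "two_sided_ideal V E s t I \<longleftrightarrow> I \<subseteq> pathalg V E s t \<and> azero \<in> I \<and>
     (\<forall>u\<in>I. \<forall>v\<in>I. (\<lambda>r. u r + v r) \<in> I) \<and>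
     (\<forall>c u. u \<in> I \<longrightarrow> (\<lambda>r. c * u r) \<in> I) \<and>
     (\<forall>f\<in>pathalg V E s t. \<forall>u\<in>I. amul t f u \<in> I \<and> amul t u f \<in> I)"

definition gen_ideal :: "'v set \<Rightarrow> 'e set \<Rightarrow> ('e \<Rightarrow> 'v) \<Rightarrow> ('e \<Rightarrow> 'v) \<Rightarrow> (('v,'e) qpath \<Rightarrow> 'k::field) \<Rightarrow> (('v,'e) qpath \<Rightarrow> 'k) set" where
  "gen_ideal V E s t u = \<Inter> {I. two_sided_ideal V E s t I \<and> u \<in> I}"

definition ideal_prod :: "('e \<Rightarrow> 'v) \<Rightarrow> (('v,'e) qpath \<Rightarrow> 'k::field) set \<Rightarrow> (('v,'e) qpath \<Rightarrow> 'k) set \<Rightarrow> (('v,'e) qpath \<Rightarrow> 'k) set" where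
  "ideal_prod t I J = {f. \<exists>(m::nat) us vs. (\<forall>i<m. us i \<in> I \<and> vs i \<in> J) \<and>
        f = (\<lambda>r. \<Sum>i<m. amul t (us i) (vs i) r)}"

definition indecomposable_ideal :: "'v set \<Rightarrow> 'e set \<Rightarrow> ('e \<Rightarrow> 'v) \<Rightarrow> ('e \<Rightarrow> 'v) \<Rightarrow> (('v,'e) qpath \<Rightarrow> 'k::field) set \<Rightarrow> bool" where
  "indecomposable_ideal V E s t I \<longleftrightarrow> two_sided_ideal V E s t I \<and> I \<noteq> {azero} \<and>
     \<not> (\<exists>J K. two_sided_ideal V E s t J \<and> two_sided_ideal V E s t K \<and>
            J \<noteq> {azero} \<and> K \<noteq> {azero} \<and> J \<inter> K = {azero} \<and>
            I = {(\<lambda>r. j r + k r) | j k. j \<in> J \<and> k \<in> K})"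

end

theory Submission
  imports Defs
begin

definition lspan :: "(('v,'e) qpath \<Rightarrow> 'k::field) \<Rightarrow> (('v,'e) qpath \<Rightarrow> 'k) set" where
  "lspan u = {f. \<exists>c. f = (\<lambda>r. c * u r)}"

lemma amul_sum:
  assumes "finite A" "finite B" "{p. f p \<noteq> 0} \<subseteq> A" "{q. g q \<noteq> 0} \<subseteq> B"
  shows "amul t f g r = (\<Sum>p\<in>A. \<Sum>q\<in>B. if pmul t p q = Some r then f p * g q else (0::'k::field))"
proof -
  have "amul t f g r = (\<Sum>(p,q)\<in>A\<times>B. if pmul t p q = Some r then f p * g q else 0)"
    unfolding amul_def
    apply (rule sum.mono_neutral_left)
    using assms by (auto split: if_splits)
  also have "\<dots> = (\<Sum>p\<in>A. \<Sum>q\<in>B. if pmul t p q = Some r then f p * g q else 0)"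
    by (simp add: sum.cartesian_product)
  finally show ?thesis .
qed

lemma path_end_x:
  assumes "is_path V E s t q" "path_end t q = x" "\<forall>e\<in>E. t e \<noteq> x"
  shows "q = (x, [])"
proof (cases "snd q = []")
  case True
  then show ?thesis using assms(2) by (cases q) (auto simp: path_end_def)
next
  case False
  then have "last (snd q) \<in> E" using assms(1) by (auto simp: is_path_def)
  then show ?thesis using assms False by (auto simp: path_end_def)
qed

lemma start_y:
  assumes "is_path V E s t p" "fst p = y" "\<forall>e\<in>E. s e \<noteq> y"
  shows "p = (y, [])"
proof (cases "snd p")
  case Nil
  then show ?thesis using assms(2) by (cases p) auto
next
  case (Cons e es)
  then show ?thesis using assms by (cases p) (auto simp: is_path_def)
qed

lemma amul_right_source:
  assumes hfin: "finite {p. h p \<noteq> 0}" and hx: "\<forall>p. h p \<noteq> 0 \<longrightarrow> fst p = x"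
    and g: "g \<in> pathalg V E s t" and src: "\<forall>e\<in>E. t e \<noteq> x"
  shows "amul t h g = (\<lambda>r. g (x,[]) * (h r::'k::field))"
proof
  fix r
  let ?A = "{p. h p \<noteq> 0}" and ?B = "{q. g q \<noteq> 0}"
  have gfin: "finite ?B" and gp: "\<And>q. g q \<noteq> 0 \<Longrightarrow> is_path V E s t q"
    using g by (auto simp: pathalg_def)
  have key: "pmul t p q = (if q = (x,[]) then Some p else None)" if "p \<in> ?A" "q \<in> ?B" for p q
  proof (cases "path_end t q = x")
    case True
    then have "q = (x,[])" using path_end_x[OF gp] that src by auto
    then show ?thesis using hx that by (cases p) (auto simp: pmul_def path_end_def)
  next
    case False
    then have "q \<noteq> (x,[])" by (auto simp: path_end_def)
    moreover have "fst p = x" using hx[rule_format, of p] that by auto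
    ultimately show ?thesis using False by (simp add: pmul_def)
  qed
  have "amul t h g r = (\<Sum>p\<in>?A. \<Sum>q\<in>?B. if pmul t p q = Some r then h p * g q else 0)"
    by (rule amul_sum[OF hfin gfin]) auto
  also have "\<dots> = (\<Sum>p\<in>?A. \<Sum>q\<in>?B. if q = (x,[]) then (if p = r then h p * g q else 0) else 0)"
    by (intro sum.cong refl) (auto simp: key)
  also have "\<dots> = (\<Sum>p\<in>?A. if p = r then h p * g (x,[]) else 0)"
    by (intro sum.cong refl) (auto simp: gfin)
  also have "\<dots> = g (x,[]) * h r"
    using hfin by auto
  finally show "amul t h g r = g (x,[]) * h r" .
qed

lemma amul_left_sink:
  assumes hfin: "finite {p. h p \<noteq> 0}" and hy: "\<forall>q. h q \<noteq> 0 \<longrightarrow> path_end t q = y"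
    and f: "f \<in> pathalg V E s t" and snk: "\<forall>e\<in>E. s e \<noteq> y"
  shows "amul t f h = (\<lambda>r. f (y,[]) * (h r::'k::field))"
proof
  fix r
  let ?A = "{p. f p \<noteq> 0}" and ?B = "{q. h q \<noteq> 0}"
  have ffin: "finite ?A" and fp: "\<And>q. f q \<noteq> 0 \<Longrightarrow> is_path V E s t q"
    using f by (auto simp: pathalg_def)
  have key: "pmul t p q = (if p = (y,[]) then Some q else None)" if "p \<in> ?A" "q \<in> ?B" for p q
  proof (cases "fst p = y")
    case True
    then have "p = (y,[])" using start_y[OF fp] that snk by auto
    then show ?thesis using hy that by (cases q) (auto simp: pmul_def)
  next
    case False
    then have "p \<noteq> (y,[])" by auto
    moreover have "fst p \<noteq> path_end t q" using hy[rule_format, of q] that False by auto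
    ultimately show ?thesis by (simp add: pmul_def)
  qed
  have "amul t f h r = (\<Sum>p\<in>?A. \<Sum>q\<in>?B. if pmul t p q = Some r then f p * h q else 0)"
    by (rule amul_sum[OF ffin hfin]) auto
  also have "\<dots> = (\<Sum>p\<in>?A. if p = (y,[]) then (\<Sum>q\<in>?B. if q = r then f p * h q else 0) else 0)"
    by (intro sum.cong refl) (auto simp: key)
  also have "\<dots> = (\<Sum>p\<in>?A. if p = (y,[]) then f p * h r else 0)"
    by (intro sum.cong refl) (auto simp: hfin)
  also have "\<dots> = f (y,[]) * h r"
    using ffin by auto
  finally show "amul t f h r = f (y,[]) * h r" .
qed


locale uprops =
  fixes V :: "'v set" and E :: "'e set" and s t :: "'e \<Rightarrow> 'v" and x y :: 'v
    and u :: "('v,'e) qpath \<Rightarrow> 'k::field"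
  assumes ufin: "finite {p. u p \<noteq> 0}"
    and upath: "\<forall>p. u p \<noteq> 0 \<longrightarrow> is_path V E s t p"
    and ux: "\<forall>p. u p \<noteq> 0 \<longrightarrow> fst p = x"
    and uy: "\<forall>p. u p \<noteq> 0 \<longrightarrow> path_end t p = y"
    and src: "\<forall>e\<in>E. t e \<noteq> x"
    and snk: "\<forall>e\<in>E. s e \<noteq> y"
begin

lemma cu_fin: "finite {p. c * u p \<noteq> 0}"
  by (rule finite_subset[OF _ ufin]) auto

lemma cu_x: "\<forall>p. c * u p \<noteq> 0 \<longrightarrow> fst p = x"
  using ux by auto

lemma cu_y: "\<forall>p. c * u p \<noteq> 0 \<longrightarrow> path_end t p = y"
  using uy by auto

lemma lspan_sub: "lspan u \<subseteq> pathalg V E s t"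
  using cu_fin upath by (auto simp: lspan_def pathalg_def)

lemma lspan_ideal: "two_sided_ideal V E s t (lspan u)"
  unfolding two_sided_ideal_def
proof (intro conjI ballI allI impI)
  show "lspan u \<subseteq> pathalg V E s t" by (rule lspan_sub)
  show "azero \<in> lspan u" unfolding lspan_def azero_def by (rule CollectI, rule exI[of _ 0]) simp
next
  fix v w assume "v \<in> lspan u" "w \<in> lspan u"
  then obtain c d where "v = (\<lambda>r. c * u r)" "w = (\<lambda>r. d * u r)" by (auto simp: lspan_def)
  then show "(\<lambda>r. v r + w r) \<in> lspan u"
    unfolding lspan_def by (auto intro!: exI[of _ "c + d"] simp: algebra_simps)
next
  fix c :: 'k and v assume "v \<in> lspan u"
  then obtain d where "v = (\<lambda>r. d * u r)" by (auto simp: lspan_def)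
  then show "(\<lambda>r. c * v r) \<in> lspan u"
    unfolding lspan_def by (auto intro!: exI[of _ "c * d"] simp: algebra_simps)
next
  fix f :: "('v,'e) qpath \<Rightarrow> 'k" and v assume f: "f \<in> pathalg V E s t" and "v \<in> lspan u"
  then obtain d where v: "v = (\<lambda>r. d * u r)" by (auto simp: lspan_def)
  have "amul t f v = (\<lambda>r. f (y,[]) * (d * u r))"
    unfolding v by (rule amul_left_sink[OF cu_fin cu_y f snk])
  then show "amul t f v \<in> lspan u"
    unfolding lspan_def by (auto intro!: exI[of _ "f (y,[]) * d"] simp: algebra_simps)
  have "amul t v f = (\<lambda>r. f (x,[]) * (d * u r))"
    unfolding v by (rule amul_right_source[OF cu_fin cu_x f src])
  then show "amul t v f \<in> lspan u"
    unfolding lspan_def by (auto intro!: exI[of _ "f (x,[]) * d"] simp: algebra_simps)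
qed

lemma gen_eq: "gen_ideal V E s t u = lspan u"
proof
  have "u \<in> lspan u" unfolding lspan_def by (auto intro!: exI[of _ 1])
  then show "gen_ideal V E s t u \<subseteq> lspan u"
    unfolding gen_ideal_def using lspan_ideal by auto
  show "lspan u \<subseteq> gen_ideal V E s t u"
    unfolding gen_ideal_def lspan_def two_sided_ideal_def by auto
qed


lemma basis_path: "z \<in> V \<Longrightarrow> basis_el (z,[]) \<in> pathalg V E s t"
  by (auto simp: basis_el_def pathalg_def is_path_def)

lemma lspan_obtain:
  assumes "\<forall>i<m. us i \<in> lspan u"
  obtains c where "\<And>i. i < m \<Longrightarrow> us i = (\<lambda>r. c i * u r)"
proof -
  have "\<forall>i. \<exists>c. i < m \<longrightarrow> us i = (\<lambda>r. c * u r)" using assms by (auto simp: lspan_def)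
  then obtain c where "\<forall>i. i < m \<longrightarrow> us i = (\<lambda>r. c i * u r)" by metis
  then show ?thesis using that by auto
qed

lemma part1:
  assumes xV: "x \<in> V" and I: "two_sided_ideal V E s t I"
  shows "ideal_prod t (lspan u) I = (if basis_el (x,[]) \<in> I then lspan u else {azero})"
proof -
  have Ip: "I \<subseteq> pathalg V E s t" using I by (simp add: two_sided_ideal_def)
  have prodform: "\<exists>d. f = (\<lambda>r. d * u r) \<and> (d \<noteq> 0 \<longrightarrow> (\<exists>v\<in>I. v (x,[]) \<noteq> 0))"
    if fin: "f \<in> ideal_prod t (lspan u) I" for f
  proof -
    obtain m :: nat and us vs where uv: "\<forall>i<m. us i \<in> lspan u \<and> vs i \<in> I"
      and f: "f = (\<lambda>r. \<Sum>i<m. amul t (us i) (vs i) r)"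
      using fin unfolding ideal_prod_def by blast
    obtain c where c: "\<And>i. i < m \<Longrightarrow> us i = (\<lambda>r. c i * u r)"
      using lspan_obtain[of m us] uv by blast
    have am: "amul t (us i) (vs i) = (\<lambda>r. vs i (x,[]) * (c i * u r))" if "i < m" for i
      unfolding c[OF that] by (rule amul_right_source[OF cu_fin cu_x _ src]) (use uv that Ip in auto)
    have "f = (\<lambda>r. (\<Sum>i<m. vs i (x,[]) * c i) * u r)"
      unfolding f by (rule ext) (simp add: am sum_distrib_left mult_ac)
    moreover have "(\<Sum>i<m. vs i (x,[]) * c i) \<noteq> 0 \<longrightarrow> (\<exists>v\<in>I. v (x,[]) \<noteq> 0)"
    proof
      assume "(\<Sum>i<m. vs i (x,[]) * c i) \<noteq> 0"
      then obtain i where "i < m" "vs i (x,[]) * c i \<noteq> 0" by (meson lessThan_iff sum.neutral)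
      then show "\<exists>v\<in>I. v (x,[]) \<noteq> 0" using uv by auto
    qed
    ultimately show ?thesis by blast
  qed
  have zero_in: "azero \<in> ideal_prod t (lspan u) I"
    unfolding ideal_prod_def azero_def by (auto intro!: exI[of _ 0])
  show ?thesis
  proof (cases "basis_el (x,[]) \<in> I")
    case True
    have "lspan u \<subseteq> ideal_prod t (lspan u) I"
    proof
      fix f assume "f \<in> lspan u"
      then obtain c where fc: "f = (\<lambda>r. c * u r)" by (auto simp: lspan_def)
      have am: "amul t f (basis_el (x,[])) = (\<lambda>r. basis_el (x,[]) (x,[]::'e list) * (c * u r))"
        unfolding fc by (rule amul_right_source[OF cu_fin cu_x _ src]) (rule basis_path[OF xV])
      show "f \<in> ideal_prod t (lspan u) I"
        unfolding ideal_prod_def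
        apply (rule CollectI, rule exI[of _ 1], rule exI[of _ "\<lambda>_. f"], rule exI[of _ "\<lambda>_. basis_el (x,[])"])
        using True \<open>f \<in> lspan u\<close> am fc by (auto simp: basis_el_def)
    qed
    moreover have "ideal_prod t (lspan u) I \<subseteq> lspan u"
      using prodform by (auto simp: lspan_def)
    ultimately show ?thesis using True by auto
  next
    case False
    have allz: "\<forall>v\<in>I. v (x,[]) = 0"
    proof (rule ccontr)
      assume "\<not> (\<forall>v\<in>I. v (x,[]) = 0)"
      then obtain v where v: "v \<in> I" "v (x,[]) \<noteq> 0" by auto
      have w: "amul t (basis_el (x,[])) v \<in> I"
        using I v basis_path[OF xV] by (auto simp: two_sided_ideal_def)
      have weq: "amul t (basis_el (x,[])) v = (\<lambda>r. v (x,[]) * basis_el (x,[]) r)"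
        by (rule amul_right_source[OF _ _ _ src]) (use v Ip in \<open>auto simp: basis_el_def\<close>)
      have "(\<lambda>r. inverse (v (x,[])) * amul t (basis_el (x,[])) v r) \<in> I"
        using I w by (auto simp: two_sided_ideal_def)
      also have "(\<lambda>r. inverse (v (x,[])) * amul t (basis_el (x,[])) v r) = basis_el (x,[])"
        using v(2) by (simp add: weq mult.assoc[symmetric])
      finally show False using False by simp
    qed
    have "ideal_prod t (lspan u) I \<subseteq> {azero}"
    proof
      fix f assume "f \<in> ideal_prod t (lspan u) I"
      from prodform[OF this] allz obtain d where "f = (\<lambda>r. d * u r)" "d = 0" by blast
      then show "f \<in> {azero}" by (simp add: azero_def)
    qed
    then show ?thesis using False zero_in by auto
  qed
qed


lemma part2:
  assumes yV: "y \<in> V" and I: "two_sided_ideal V E s t I"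
  shows "ideal_prod t I (lspan u) = (if basis_el (y,[]) \<in> I then lspan u else {azero})"
proof -
  have Ip: "I \<subseteq> pathalg V E s t" using I by (simp add: two_sided_ideal_def)
  have prodform: "\<exists>d. f = (\<lambda>r. d * u r) \<and> (d \<noteq> 0 \<longrightarrow> (\<exists>v\<in>I. v (y,[]) \<noteq> 0))"
    if fin: "f \<in> ideal_prod t I (lspan u)" for f
  proof -
    obtain m :: nat and us vs where uv: "\<forall>i<m. vs i \<in> I \<and> us i \<in> lspan u"
      and f: "f = (\<lambda>r. \<Sum>i<m. amul t (vs i) (us i) r)"
      using fin unfolding ideal_prod_def by blast
    obtain c where c: "\<And>i. i < m \<Longrightarrow> us i = (\<lambda>r. c i * u r)"
      using lspan_obtain[of m us] uv by blast
    have am: "amul t (vs i) (us i) = (\<lambda>r. vs i (y,[]) * (c i * u r))" if "i < m" for i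
      unfolding c[OF that] by (rule amul_left_sink[OF cu_fin cu_y _ snk]) (use uv that Ip in auto)
    have "f = (\<lambda>r. (\<Sum>i<m. vs i (y,[]) * c i) * u r)"
      unfolding f by (rule ext) (simp add: am sum_distrib_left mult_ac)
    moreover have "(\<Sum>i<m. vs i (y,[]) * c i) \<noteq> 0 \<longrightarrow> (\<exists>v\<in>I. v (y,[]) \<noteq> 0)"
    proof
      assume "(\<Sum>i<m. vs i (y,[]) * c i) \<noteq> 0"
      then obtain i where "i < m" "vs i (y,[]) * c i \<noteq> 0" by (meson lessThan_iff sum.neutral)
      then show "\<exists>v\<in>I. v (y,[]) \<noteq> 0" using uv by auto
    qed
    ultimately show ?thesis by blast
  qed
  have zero_in: "azero \<in> ideal_prod t I (lspan u)"
    unfolding ideal_prod_def azero_def by (auto intro!: exI[of _ 0])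
  show ?thesis
  proof (cases "basis_el (y,[]) \<in> I")
    case True
    have "lspan u \<subseteq> ideal_prod t I (lspan u)"
    proof
      fix f assume "f \<in> lspan u"
      then obtain c where fc: "f = (\<lambda>r. c * u r)" by (auto simp: lspan_def)
      have am: "amul t (basis_el (y,[])) f = (\<lambda>r. basis_el (y,[]) (y,[]::'e list) * (c * u r))"
        unfolding fc by (rule amul_left_sink[OF cu_fin cu_y _ snk]) (rule basis_path[OF yV])
      show "f \<in> ideal_prod t I (lspan u)"
        unfolding ideal_prod_def
        apply (rule CollectI, rule exI[of _ 1], rule exI[of _ "\<lambda>_. basis_el (y,[])"], rule exI[of _ "\<lambda>_. f"])
        using True \<open>f \<in> lspan u\<close> am fc by (auto simp: basis_el_def)
    qed
    moreover have "ideal_prod t I (lspan u) \<subseteq> lspan u"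
      using prodform by (auto simp: lspan_def)
    ultimately show ?thesis using True by auto
  next
    case False
    have allz: "\<forall>v\<in>I. v (y,[]) = 0"
    proof (rule ccontr)
      assume "\<not> (\<forall>v\<in>I. v (y,[]) = 0)"
      then obtain v where v: "v \<in> I" "v (y,[]) \<noteq> 0" by auto
      have w: "amul t v (basis_el (y,[])) \<in> I"
        using I v basis_path[OF yV] by (auto simp: two_sided_ideal_def)
      have weq: "amul t v (basis_el (y,[])) = (\<lambda>r. v (y,[]) * basis_el (y,[]) r)"
        by (rule amul_left_sink[OF _ _ _ snk]) (use v Ip in \<open>auto simp: basis_el_def path_end_def\<close>)
      have "(\<lambda>r. inverse (v (y,[])) * amul t v (basis_el (y,[])) r) \<in> I"
        using I w by (auto simp: two_sided_ideal_def)
      also have "(\<lambda>r. inverse (v (y,[])) * amul t v (basis_el (y,[])) r) = basis_el (y,[])"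
        using v(2) by (simp add: weq mult.assoc[symmetric])
      finally show False using False by simp
    qed
    have "ideal_prod t I (lspan u) \<subseteq> {azero}"
    proof
      fix f assume "f \<in> ideal_prod t I (lspan u)"
      from prodform[OF this] allz obtain d where "f = (\<lambda>r. d * u r)" "d = 0" by blast
      then show "f \<in> {azero}" by (simp add: azero_def)
    qed
    then show ?thesis using False zero_in by auto
  qed
qed

lemma part3:
  fixes u' :: "('v,'e) qpath \<Rightarrow> 'k"
  assumes xy: "x \<noteq> y" and u'y: "\<forall>p. u' p \<noteq> 0 \<longrightarrow> path_end t p = y"
    and u'p: "lspan u' \<subseteq> pathalg V E s t"
  shows "ideal_prod t (lspan u) (lspan u') = {azero}"
proof
  have u'0: "u' (x,[]) = 0" using u'y[rule_format, of "(x,[])"] xy by (auto simp: path_end_def)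
  show "ideal_prod t (lspan u) (lspan u') \<subseteq> {azero}"
  proof
    fix f assume fin: "f \<in> ideal_prod t (lspan u) (lspan u')"
    obtain m :: nat and us vs where uv: "\<forall>i<m. us i \<in> lspan u \<and> vs i \<in> lspan u'"
      and f: "f = (\<lambda>r. \<Sum>i<m. amul t (us i) (vs i) r)"
      using fin unfolding ideal_prod_def by blast
    obtain c where c: "\<And>i. i < m \<Longrightarrow> us i = (\<lambda>r. c i * u r)"
      using lspan_obtain[of m us] uv by blast
    have z: "amul t (us i) (vs i) = azero" if im: "i < m" for i
    proof -
      obtain d where d: "vs i = (\<lambda>r. d * u' r)" using uv im by (auto simp: lspan_def)
      have "amul t (us i) (vs i) = (\<lambda>r. vs i (x,[]) * (c i * u r))"
        unfolding c[OF im] by (rule amul_right_source[OF cu_fin cu_x _ src]) (use uv im u'p in auto)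
      then show ?thesis by (simp add: d u'0 azero_def)
    qed
    show "f \<in> {azero}" unfolding f using z by (simp add: azero_def)
  qed
  show "{azero} \<subseteq> ideal_prod t (lspan u) (lspan u')"
    unfolding ideal_prod_def azero_def by (auto intro!: exI[of _ 0])
qed

end

lemma chain_append: "chain s t v (xs @ [e]) = (chain s t v xs \<and> s e = path_end t (v, xs))"
  by (induction xs arbitrary: v) (auto simp: path_end_def)

lemma max_start:
  assumes "maximal_path V E s t p" "s ` E \<subseteq> V"
  shows "\<forall>e\<in>E. t e \<noteq> fst p"
proof (intro ballI notI)
  fix e assume e: "e \<in> E" "t e = fst p"
  have pp: "is_path V E s t p" using assms by (simp add: maximal_path_def)
  let ?q = "(s e, e # snd p)"
  have "is_path V E s t ?q" using pp e assms(2) by (auto simp: is_path_def)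
  moreover have "?q \<noteq> p" by (cases p) auto
  moreover have "subpath t p ?q" unfolding subpath_def
    by (rule exI[of _ "[e]"], rule exI[of _ "[]"]) (use e in \<open>auto simp: path_end_def\<close>)
  ultimately show False using assms(1) by (auto simp: maximal_path_def)
qed

lemma path_end_V:
  assumes "is_path V E s t p" "t ` E \<subseteq> V"
  shows "path_end t p \<in> V"
proof (cases "snd p = []")
  case True
  then show ?thesis using assms by (auto simp: path_end_def is_path_def)
next
  case False
  then have "last (snd p) \<in> E" using assms(1) by (auto simp: is_path_def)
  then show ?thesis using assms(2) False by (auto simp: path_end_def)
qed

lemma max_end:
  assumes "maximal_path V E s t p" "t ` E \<subseteq> V"
  shows "\<forall>e\<in>E. s e \<noteq> path_end t p"
proof (intro ballI notI)
  fix e assume e: "e \<in> E" "s e = path_end t p"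
  have pp: "is_path V E s t p" using assms by (simp add: maximal_path_def)
  let ?q = "(fst p, snd p @ [e])"
  have "is_path V E s t ?q" using pp e by (auto simp: is_path_def chain_append)
  moreover have "?q \<noteq> p" by (cases p) auto
  moreover have "subpath t p ?q" unfolding subpath_def
    by (rule exI[of _ "[]"], rule exI[of _ "[e]"]) (auto simp: path_end_def)
  ultimately show False using assms(1) by (auto simp: maximal_path_def)
qed

lemma uprops_u:
  assumes "is_path V E s t \<omega>" "is_path V E s t \<upsilon>" "fst \<omega> = x" "fst \<upsilon> = x"
    "path_end t \<omega> = y" "path_end t \<upsilon> = y" "\<forall>e\<in>E. t e \<noteq> x" "\<forall>e\<in>E. s e \<noteq> y"
  shows "uprops V E s t x y (\<lambda>r. basis_el \<omega> r + (c::'k::field) * basis_el \<upsilon> r)"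
proof -
  have sub: "{p. basis_el \<omega> p + c * basis_el \<upsilon> p \<noteq> 0} \<subseteq> {\<omega>, \<upsilon>}"
    by (auto simp: basis_el_def split: if_splits)
  show ?thesis
    unfolding uprops_def
  proof (intro conjI allI impI)
    show "finite {p. basis_el \<omega> p + c * basis_el \<upsilon> p \<noteq> 0}"
      using sub by (rule finite_subset) simp
  next
    fix p assume "basis_el \<omega> p + c * basis_el \<upsilon> p \<noteq> 0"
    then have "p = \<omega> \<or> p = \<upsilon>" using sub by blast
    then show "is_path V E s t p" "fst p = x" "path_end t p = y" using assms by auto
  qed (use assms in auto)
qed

theorem lemma23:
  fixes V :: "'v set" and E :: "'e set" and s t :: "'e \<Rightarrow> 'v" and n :: nat
    and x y :: 'v and \<omega> \<upsilon> :: "('v,'e) qpath" and a :: "'k::alg_closed_field"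
  assumes "admissible_A V E s t n"
    and "{v. is_source V E s t v} = {x}"
    and "{v. is_sink V E s t v} = {y}"
    and "\<omega> \<noteq> \<upsilon>"
    and "{p. maximal_path V E s t p} = {\<omega>, \<upsilon>}"
    and "a \<noteq> 0"
  shows "(\<forall>I. indecomposable_ideal V E s t I \<longrightarrow>
            ideal_prod t (gen_ideal V E s t (\<lambda>r. basis_el \<omega> r + a * basis_el \<upsilon> r)) I =
              (if basis_el (x, []) \<in> I
               then gen_ideal V E s t (\<lambda>r. basis_el \<omega> r + a * basis_el \<upsilon> r)
               else {azero}))
       \<and> (\<forall>I. indecomposable_ideal V E s t I \<longrightarrow>
            ideal_prod t I (gen_ideal V E s t (\<lambda>r. basis_el \<omega> r + a * basis_el \<upsilon> r)) =
              (if basis_el (y, []) \<in> I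
               then gen_ideal V E s t (\<lambda>r. basis_el \<omega> r + a * basis_el \<upsilon> r)
               else {azero}))
       \<and> (\<forall>b::'k. b \<noteq> 0 \<longrightarrow>
            ideal_prod t (gen_ideal V E s t (\<lambda>r. basis_el \<omega> r + a * basis_el \<upsilon> r))
                         (gen_ideal V E s t (\<lambda>r. basis_el \<omega> r + b * basis_el \<upsilon> r)) = {azero})"
proof -
  have cq: "cycle_quiver V E s t n" using assms(1) by (simp add: admissible_A_def)
  then have sE: "s ` E \<subseteq> V" and tE: "t ` E \<subseteq> V" by (auto simp: cycle_quiver_def)
  have xs: "is_source V E s t x" using assms(2) by auto
  have ys: "is_sink V E s t y" using assms(3) by auto
  have xV: "x \<in> V" and src: "\<forall>e\<in>E. t e \<noteq> x" using xs by (auto simp: is_source_def)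
  have yV: "y \<in> V" and snk: "\<forall>e\<in>E. s e \<noteq> y" using ys by (auto simp: is_sink_def)
  have xy: "x \<noteq> y"
  proof -
    from cq obtain vs es where L: "length vs = n" "length es = n" "set vs = V" "set es = E"
      and adj: "\<forall>i<n. {s (es ! i), t (es ! i)} = {vs ! i, vs ! ((i + 1) mod n)}"
      unfolding cycle_quiver_def by blast
    obtain i where i: "i < n" "vs ! i = x" using xV L by (metis in_set_conv_nth)
    have eE: "es ! i \<in> E" using L i by auto
    have "{s (es ! i), t (es ! i)} = {vs ! i, vs ! ((i + 1) mod n)}" using adj i(1) by blast
    then have "x \<in> {s (es ! i), t (es ! i)}" using i(2) by simp
    then have "s (es ! i) = x \<or> t (es ! i) = x" by blast
    then have "s (es ! i) = x" using src eE by auto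
    then show ?thesis using snk eE by auto
  qed
  have props: "is_path V E s t p \<and> fst p = x \<and> path_end t p = y" if "p \<in> {\<omega>, \<upsilon>}" for p
  proof -
    have m: "maximal_path V E s t p" using assms(5) that by auto
    have pp: "is_path V E s t p" using m by (simp add: maximal_path_def)
    have "is_source V E s t (fst p)"
      using max_start[OF m sE] pp by (auto simp: is_source_def is_path_def)
    then have "fst p = x" using assms(2) by auto
    moreover have "is_sink V E s t (path_end t p)"
      using max_end[OF m tE] path_end_V[OF pp tE] by (auto simp: is_sink_def)
    then have "path_end t p = y" using assms(3) by auto
    ultimately show ?thesis using pp by auto
  qed
  have U: "uprops V E s t x y (\<lambda>r. basis_el \<omega> r + (c::'k) * basis_el \<upsilon> r)" for c
    using props src snk by (intro uprops_u) auto
  have G: "gen_ideal V E s t (\<lambda>r. basis_el \<omega> r + (c::'k) * basis_el \<upsilon> r)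
     = lspan (\<lambda>r. basis_el \<omega> r + c * basis_el \<upsilon> r)" for c
    using uprops.gen_eq[OF U] .
  show ?thesis
  proof (intro conjI allI impI)
    fix I :: "(('v,'e) qpath \<Rightarrow> 'k) set" assume "indecomposable_ideal V E s t I"
    then have I: "two_sided_ideal V E s t I" by (simp add: indecomposable_ideal_def)
    show "ideal_prod t (gen_ideal V E s t (\<lambda>r. basis_el \<omega> r + a * basis_el \<upsilon> r)) I =
              (if basis_el (x, []) \<in> I
               then gen_ideal V E s t (\<lambda>r. basis_el \<omega> r + a * basis_el \<upsilon> r)
               else {azero})"
      unfolding G using uprops.part1[OF U xV I] .
    show "ideal_prod t I (gen_ideal V E s t (\<lambda>r. basis_el \<omega> r + a * basis_el \<upsilon> r)) =
              (if basis_el (y, []) \<in> I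
               then gen_ideal V E s t (\<lambda>r. basis_el \<omega> r + a * basis_el \<upsilon> r)
               else {azero})"
      unfolding G using uprops.part2[OF U yV I] .
  next
    fix b :: 'k assume "b \<noteq> 0"
    have u'y: "\<forall>p. basis_el \<omega> p + b * basis_el \<upsilon> p \<noteq> 0 \<longrightarrow> path_end t p = y"
      using props by (auto simp: basis_el_def split: if_splits)
    show "ideal_prod t (gen_ideal V E s t (\<lambda>r. basis_el \<omega> r + a * basis_el \<upsilon> r))
                         (gen_ideal V E s t (\<lambda>r. basis_el \<omega> r + b * basis_el \<upsilon> r)) = {azero}"
      unfolding G by (rule uprops.part3[OF U xy u'y uprops.lspan_sub[OF U]])
  qed
qed

end
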